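(* Let $q$ be a prime power, $m$ a positive integer, and $n=q^m-1$. Let $x,y$ be integers with $1\le x,y<q^{\lceil m/2\rceil}+1$, $x\not\equiv0\pmod q$, $y\not\equiv 0\pmod q$, and $x\ne y$. Then the $q$-ary cyclotomic cosets $C_x=\{xq^\ell\bmod n\mid\ell\in\mathbf{Z}\}$ and $C_y$ are distinct (hence disjoint). *)

theory Defs
  imports Complex_Main "HOL-Number_Theory.Prime_Powers"
begin

text \<open>The q-ary cyclotomic coset of x modulo n: the set of residues x q^l mod n.
  Exponents range over the naturals; since q^m = 1 mod n for n = q^m - 1, this is the
  same set as with integer exponents.\<close>
definition cyclotomic_coset :: "nat \<Rightarrow> int \<Rightarrow> int \<Rightarrow> int set" where
  "cyclotomic_coset q n x = {(x * int q ^ l) mod n | l::nat. True}"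

end

theory Submission
  imports Defs
begin

lemma mod_eq_range:
  fixes y v n :: int
  assumes "1 \<le> y" "y \<le> n" "1 \<le> v" "v \<le> n" "y mod n = v mod n"
  shows "y = v"
proof (rule ccontr)
  assume ne: "y \<noteq> v"
  have "n dvd (y - v)" using assms(5) by (simp add: mod_eq_dvd_iff)
  then have "\<bar>n\<bar> \<le> \<bar>y - v\<bar>" using ne by (intro dvd_imp_le_int) auto
  then show False using assms by auto
qed

theorem mainTheorem5:
  fixes q m :: nat and x y n :: int
  assumes "primepow q" and "m > 0" and "n = int q ^ m - 1"
    and "1 \<le> x" and "x < int q ^ nat \<lceil>real m / 2\<rceil> + 1"
    and "1 \<le> y" and "y < int q ^ nat \<lceil>real m / 2\<rceil> + 1"
    and "x mod int q \<noteq> 0" and "y mod int q \<noteq> 0"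
    and "x \<noteq> y"
  shows "cyclotomic_coset q n x \<noteq> cyclotomic_coset q n y"
proof
  assume eq: "cyclotomic_coset q n x = cyclotomic_coset q n y"
  define Q where "Q = int q"
  define h where "h = nat \<lceil>real m / 2\<rceil>"
  have q2: "q \<ge> 2" using assms(1) primepow_gt_Suc_0 by fastforce
  hence Q2: "Q \<ge> 2" unfolding Q_def by simp
  have h1: "h \<ge> 1" "2 * h \<ge> m" "2 * h \<le> m + 1" unfolding h_def using assms(2)
    by linarith+
  have hm: "h \<le> m" using h1 assms(2) by linarith
  have Qh: "Q ^ h mod Q = 0" using h1 by (simp add: power_eq_if)
  have xlt: "x < Q ^ h" using assms(5,8) Qh unfolding Q_def h_def
    by (metis int_one_le_iff_zero_less le_less not_less zle_add1_eq_le)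
  have ylt: "y < Q ^ h" using assms(7,9) Qh unfolding Q_def h_def
    by (metis int_one_le_iff_zero_less le_less not_less zle_add1_eq_le)
  have QhQm: "Q ^ h \<le> Q ^ m" using hm Q2 by (simp add: power_increasing)
  have nQ: "n = Q ^ m - 1" using assms(3) Q_def by simp
  have yn: "y \<le> n" using ylt QhQm nQ by simp
  have xm: "x < Q ^ m" using xlt QhQm by simp
  have "y mod n \<in> cyclotomic_coset q n y" unfolding cyclotomic_coset_def
    by (rule CollectI, rule exI[of _ 0]) simp
  then obtain l0 where l0: "y mod n = x * Q ^ l0 mod n"
    using eq unfolding cyclotomic_coset_def Q_def by auto
  define l where "l = l0 mod m"
  have lm: "l < m" using assms(2) l_def by simp
  have Qm1: "Q ^ m mod n = 1 mod n" using nQ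
    by (metis add.commute add_diff_cancel_left' diff_add_cancel mod_add_self2)
  have pk: "Q ^ (m * k) mod n = 1 mod n" for k
  proof -
    have "Q ^ (m * k) mod n = (Q ^ m mod n) ^ k mod n" by (simp add: power_mult power_mod)
    also have "\<dots> = 1 mod n" using Qm1 by (metis power_mod power_one)
    finally show ?thesis .
  qed
  have "x * Q ^ l0 mod n = x * Q ^ l mod n"
  proof -
    have "Q ^ l0 = Q ^ (m * (l0 div m)) * Q ^ l" unfolding l_def
      by (metis div_mult_mod_eq mult.commute power_add)
    hence "x * Q ^ l0 mod n = (x * Q ^ l) * (Q ^ (m * (l0 div m))) mod n"
      by (simp add: ac_simps)
    also have "\<dots> = (x * Q ^ l) * (Q ^ (m * (l0 div m)) mod n) mod n"
      by (simp add: mod_mult_right_eq)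
    also have "\<dots> = (x * Q ^ l) * (1 mod n) mod n" using pk by simp
    also have "\<dots> = x * Q ^ l mod n" by (simp add: mod_mult_right_eq)
    finally show ?thesis .
  qed
  with l0 have yl: "y mod n = x * Q ^ l mod n" by simp
  define a where "a = x mod Q ^ (m - l)"
  define b where "b = x div Q ^ (m - l)"
  define v where "v = a * Q ^ l + b"
  have Qpos: "Q ^ k > 0" for k using Q2 by simp
  have xab: "x = a + Q ^ (m - l) * b" unfolding a_def b_def by simp
  have a0: "0 \<le> a" "a \<le> Q ^ (m - l) - 1" unfolding a_def using Qpos[of "m-l"] by auto
  have b0: "0 \<le> b" unfolding b_def using assms(4) Qpos[of "m-l"] by (simp add: pos_imp_zdiv_nonneg_iff)
  have QQ: "Q ^ (m - l) * Q ^ l = Q ^ m" using lm by (simp add: power_add[symmetric])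
  have blt: "b < Q ^ l"
  proof (rule ccontr)
    assume "\<not> b < Q ^ l"
    hence "Q ^ (m - l) * Q ^ l \<le> Q ^ (m - l) * b" using Qpos[of "m-l"] by simp
    thus False using xab xm a0 QQ by linarith
  qed
  have "x * Q ^ l = a * Q ^ l + b * (Q ^ (m - l) * Q ^ l)" using xab by (simp add: algebra_simps)
  also have "\<dots> = a * Q ^ l + b * (n + 1)" using QQ nQ by simp
  finally have "x * Q ^ l = v + b * n" unfolding v_def by (simp add: algebra_simps)
  hence vmod: "x * Q ^ l mod n = v mod n" by simp
  have v1: "1 \<le> v"
  proof (rule ccontr)
    assume "\<not> 1 \<le> v"
    hence "v = 0" using a0 b0 Qpos[of l] unfolding v_def
      by (smt (verit) mult_nonneg_nonneg)
    hence "a = 0" "b = 0" using a0 b0 Qpos[of l] unfolding v_def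
      by (smt (verit) mult_nonneg_nonneg mult_pos_pos)+
    thus False using xab assms(4) by simp
  qed
  have "a * Q ^ l \<le> (Q ^ (m - l) - 1) * Q ^ l" using a0 Qpos[of l] by simp
  hence vn: "v \<le> n" using blt QQ nQ unfolding v_def by (simp add: algebra_simps)
  have yv: "y = v" using mod_eq_range[OF assms(6) yn v1 vn] yl vmod by simp
  show False
  proof (cases "l < h")
    case True
    have "m - l \<ge> h" using True h1 by linarith
    hence "Q ^ h \<le> Q ^ (m - l)" using Q2 by (simp add: power_increasing)
    hence "b = 0" "a = x" unfolding a_def b_def using xlt assms(4) by simp_all
    hence yv2: "y = x * Q ^ l" using yv v_def by simp
    show False
    proof (cases "l = 0")
      case True thus False using yv2 assms(10) by simp
    next
      case False
      hence "Q dvd y" using yv2 by (simp add: power_eq_if)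
      thus False using assms(9) Q_def by simp
    qed
  next
    case False
    have "\<not> Q ^ (m - l) dvd x"
    proof
      assume "Q ^ (m - l) dvd x"
      moreover have "Q dvd Q ^ (m - l)" using lm by (simp add: dvd_power)
      ultimately have "Q dvd x" by (rule dvd_trans[rotated])
      thus False using assms(8) Q_def by simp
    qed
    hence "a \<noteq> 0" unfolding a_def by auto
    hence "a \<ge> 1" using a0 by simp
    hence "Q ^ l \<le> a * Q ^ l" using Qpos[of l] by simp
    moreover have "Q ^ h \<le> Q ^ l" using False Q2 by (simp add: power_increasing)
    ultimately show False using yv ylt b0 unfolding v_def by linarith
  qed
qed

end
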